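(* Let $0\le m\le n\le l$ with $n\ge1$, and let $([m],v,e),([n],w,f)$ be graphs with attributes in $\mathcal X,\mathcal Y$. Extend $([n],w,f)$ to $([l],w,f)$ by $w_i=x'_*$, $f_{ii}=y_0$ for $n+1\le i\le l$ and $f_{ii'}=y'_*$ whenever $\max\{i,i'\}\ge n+1$, $i\ne i'$. Then, computing GOSPA1 in the extended spaces $\mathcal X\cup\{x_*,x'_*\}$, $\mathcal Y\cup\{y_*,y'_*\}$ with the same $p$, $C_1$ and $C_{\mathcal Y}$, $$d_{\mathbb G,R_1}(([m],v,e),([n],w,f))\le d_{\mathbb G,R_1}(([m],v,e),([l],w,f)).$$
   Context: $(\mathcal X,d_{\mathcal X})$, $(\mathcal Y,d_{\mathcal Y})$ are pseudometric spaces with $\mathrm{diam}(\mathcal X)\le C_{\mathcal X}$, $\mathrm{diam}(\mathcal Y)\le C_{\mathcal Y}$, $y_0\in\mathcal Y$ a distinguished "no edge" element, $p\ge1$, $C_1^p\ge C_{\mathcal X}^p+\frac12C_{\mathcal Y}^p$. New points $x_*,x'_*$ are adjoined to $\mathcal X$ with $d_{\mathcal X}(x_*,x)^p=d_{\mathcal X}(x'_*,x)^p=d_{\mathcal X}(x_*,x'_* )^p=C_1^p-\frac12C_{\mathcal Y}^p$ for all $x\in\mathcal X$ (symmetric, zero self-distances), and $y_*,y'_*$ to $\mathcal Y$ with $d_{\mathcal Y}(y_*,y)=d_{\mathcal Y}(y'_*,y)=d_{\mathcal Y}(y_*,y'_* )=C_{\mathcal Y}$ for $y\in\mathcal Y$.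 A graph $([n],v,e)$ has vertex map $v$ into the (extended) vertex space and symmetric edge map $e$ into the (extended) edge space with $e_{ii}=y_0$; $S_n$ is the set of permutations of $[n]=\{1,\dots,n\}$. GOSPA1 distance (order $p$, penalty $C_1$): for graphs with $n\ge\max\{m,1\}$, with $0/0:=0$, $$d_{\mathbb G,R_1}(([m],v,e),([n],w,f))=n^{-1/p}\min_{\pi\in S_n}\Big[(n-m)C_1^p+\sum_{i\in[m]}d_{\mathcal X}(v_i,w_{\pi(i)})^p+\frac{1}{2(n-1)}\sum_{i\in[m]}\Big(\sum_{i'\in[m]}d_{\mathcal Y}(e_{ii'},f_{\pi(i)\pi(i')})^p+(n-m)C_{\mathcal Y}^p\Big)\Big]^{1/p}.$$ *)

theory Defs
  imports Complex_Main "HOL-Combinatorics.Permutations"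
begin

definition pseudometric :: "('a \<Rightarrow> 'a \<Rightarrow> real) \<Rightarrow> bool" where
  "pseudometric d \<longleftrightarrow> (\<forall>x. d x x = 0) \<and> (\<forall>x y. d x y = d y x) \<and>
     (\<forall>x y z. d x z \<le> d x y + d y z)"

text \<open>Extension of a space by two new points \<open>Star\<close> (x_*) and \<open>Star'\<close> (x'_*).\<close>
datatype 'a ext = Orig 'a | Star | Star'

fun ext_dist :: "('a \<Rightarrow> 'a \<Rightarrow> real) \<Rightarrow> real \<Rightarrow> 'a ext \<Rightarrow> 'a ext \<Rightarrow> real" where
  "ext_dist d c (Orig x) (Orig y) = d x y"
| "ext_dist d c a b = (if a = b then 0 else c)"

text \<open>Graph \<open>([n],v,e)\<close>: vertex map v, symmetric edge map e with e_ii = y0.\<close>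
definition is_graph :: "'y \<Rightarrow> nat \<Rightarrow> (nat \<Rightarrow> nat \<Rightarrow> 'y) \<Rightarrow> bool" where
  "is_graph y0 n e \<longleftrightarrow> (\<forall>i\<in>{1..n}. e i i = y0) \<and>
     (\<forall>i\<in>{1..n}. \<forall>i'\<in>{1..n}. e i i' = e i' i)"

definition gospa1_cost ::
  "('x \<Rightarrow> 'x \<Rightarrow> real) \<Rightarrow> ('y \<Rightarrow> 'y \<Rightarrow> real) \<Rightarrow> real \<Rightarrow> real \<Rightarrow> real \<Rightarrow>
   nat \<Rightarrow> (nat \<Rightarrow> 'x) \<Rightarrow> (nat \<Rightarrow> nat \<Rightarrow> 'y) \<Rightarrow>
   nat \<Rightarrow> (nat \<Rightarrow> 'x) \<Rightarrow> (nat \<Rightarrow> nat \<Rightarrow> 'y) \<Rightarrow> (nat \<Rightarrow> nat) \<Rightarrow> real" where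
  "gospa1_cost dX dY p C1 CY m v e n w f \<pi> =
     real (n - m) * C1 powr p
     + (\<Sum>i\<in>{1..m}. dX (v i) (w (\<pi> i)) powr p)
     + (\<Sum>i\<in>{1..m}. (\<Sum>i'\<in>{1..m}. dY (e i i') (f (\<pi> i) (\<pi> i')) powr p)
                      + real (n - m) * CY powr p) / (2 * (real n - 1))"

text \<open>GOSPA1 distance (for n \<ge> max m 1). Division by zero (n = 1) yields 0 in HOL,
  matching the convention 0/0 := 0.\<close>
definition gospa1 ::
  "('x \<Rightarrow> 'x \<Rightarrow> real) \<Rightarrow> ('y \<Rightarrow> 'y \<Rightarrow> real) \<Rightarrow> real \<Rightarrow> real \<Rightarrow> real \<Rightarrow>
   nat \<Rightarrow> (nat \<Rightarrow> 'x) \<Rightarrow> (nat \<Rightarrow> nat \<Rightarrow> 'y) \<Rightarrow>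
   nat \<Rightarrow> (nat \<Rightarrow> 'x) \<Rightarrow> (nat \<Rightarrow> nat \<Rightarrow> 'y) \<Rightarrow> real" where
  "gospa1 dX dY p C1 CY m v e n w f =
     real n powr (- 1 / p) *
     (Min {gospa1_cost dX dY p C1 CY m v e n w f \<pi> | \<pi>. \<pi> permutes {1..n}}) powr (1 / p)"

definition ext_vertices :: "nat \<Rightarrow> (nat \<Rightarrow> 'x) \<Rightarrow> nat \<Rightarrow> 'x ext" where
  "ext_vertices n w i = (if i \<le> n then Orig (w i) else Star')"

definition ext_edges :: "'y \<Rightarrow> nat \<Rightarrow> (nat \<Rightarrow> nat \<Rightarrow> 'y) \<Rightarrow> nat \<Rightarrow> nat \<Rightarrow> 'y ext" where
  "ext_edges y0 n f i i' =
     (if i \<le> n \<and> i' \<le> n then Orig (f i i') else if i = i' then Orig y0 else Star')"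

end

theory Submission
  imports Defs
begin

lemma extend_perm:
  fixes N K :: "nat set" and g :: "nat \<Rightarrow> nat"
  assumes "finite N" "K \<subseteq> N" "inj_on g K" "g ` K \<subseteq> N"
  shows "\<exists>\<sigma>. \<sigma> permutes N \<and> (\<forall>i\<in>K. \<sigma> i = g i)"
proof -
  have fK: "finite K" using assms finite_subset by blast
  have "card (N - K) = card (N - g ` K)"
    using assms fK by (simp add: card_Diff_subset card_image finite_imageI)
  then obtain h where h: "bij_betw h (N - K) (N - g ` K)"
    using finite_same_card_bij assms by (meson finite_Diff)
  define s where "s = (\<lambda>i. if i \<in> K then g i else if i \<in> N then h i else i)"
  have b1: "bij_betw s K (g ` K)"
    using assms(3) unfolding s_def bij_betw_def inj_on_def by auto
  have b2: "bij_betw s (N - K) (N - g ` K)"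
    using h unfolding s_def by (rule bij_betw_cong[THEN iffD1, rotated]) auto
  have "bij_betw s (K \<union> (N - K)) (g ` K \<union> (N - g ` K))"
    by (rule bij_betw_combine[OF b1 b2]) auto
  moreover have "K \<union> (N - K) = N" "g ` K \<union> (N - g ` K) = N" using assms by auto
  ultimately have "bij_betw s N N" by simp
  moreover have "\<And>x. x \<notin> N \<Longrightarrow> s x = x" using assms unfolding s_def by auto
  ultimately have "s permutes N" by (rule bij_imp_permutes)
  thus ?thesis unfolding s_def by auto
qed

lemma arith_key:
  fixes n l m :: nat and C E R Q :: real
  assumes "m \<le> n" "n \<le> l" "1 \<le> n" "R \<le> m * (C - E/2)" "Q \<le> m * (real m - 1) * E"
    "0 \<le> Q" "0 \<le> E" "E/2 \<le> C" "0 \<le> R"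
  shows "l * ((real (n-m)) * C + R + (Q + m * real (n-m) * E) / (2 * (real n - 1)))
      \<le> n * ((real (l-m)) * C + R + (Q + m * real (l-m) * E) / (2 * (real l - 1)))"
proof (cases "n = 1")
  case True
  then have "m = 0 \<or> m = 1" using assms by auto
  thus ?thesis
  proof
    assume m0: "m = 0"
    then have "R = 0" "Q = 0" using assms by auto
    thus ?thesis using m0 True assms by (simp add: of_nat_diff)
  next
    assume m1: "m = 1"
    then have Q0: "Q = 0" using assms by auto
    show ?thesis
    proof (cases "l = 1")
      case True thus ?thesis using m1 Q0 `n=1` by simp
    next
      case False
      then have l2: "real l - 1 > 0" using assms by auto
      have "(Q + m * real (l-m) * E) / (2 * (real l - 1)) = E/2"
        using m1 Q0 l2 assms by (simp add: of_nat_diff field_simps)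
      moreover have "real l * R \<le> (real l - 1) * C + R + E/2"
      proof -
        have "(real l - 1) * R \<le> (real l - 1) * (C - E/2)"
          using m1 assms l2 by (intro mult_left_mono) auto
        moreover have "real l * R = (real l - 1)*R + R" by algebra
        moreover have "(real l - 1)*(C-E/2) = (real l - 1)*C - (real l - 1)*E/2" by algebra
        moreover have "(real l - 1)*E \<ge> 0" using l2 assms by simp
        ultimately show ?thesis using assms by linarith
      qed
      ultimately have X: "(Q + m * real (l-m) * E) / (2 * (real l - 1)) = E/2"
         and Y: "real l * R \<le> (real l - 1) * C + R + E/2" .
      have L: "l * (real (n-m) * C + R + (Q + m*real(n-m)*E)/(2*(real n - 1))) = l*R"
        using m1 `n=1` by simp
      have Rr: "n * (real (l-m) * C + R + (Q + m * real (l-m) * E) / (2 * (real l - 1)))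
          = real (l-m)*C + R + E/2" using X `n=1` by simp
      have "real (l-m) = real l - 1" using m1 assms by (simp add: of_nat_diff)
      then have Rr': "n * (real (l-m) * C + R + (Q + m * real (l-m) * E) / (2 * (real l - 1)))
          = (real l - 1)*C + R + E/2" using Rr by simp
      show ?thesis unfolding L Rr' using Y by linarith
    qed
  qed
next
  case False
  then have n2: "real n - 1 > 0" "real l - 1 > 0" using assms by auto
  define a where "a = real n - 1"
  define b where "b = real l - 1"
  have "real (n-m) = real n - m" "real (l-m) = real l - m" using assms by (auto simp: of_nat_diff)
  have G: "0 \<le> 2*a*b*(m*C-R) - Q*(a+b+1) + m*E*(m*(a+b+1) - (a+1)*(b+1))"
  proof -
    have ab: "0 \<le> 2*a*b" using n2 unfolding a_def b_def by simp
    have "m*E/2 \<le> m*C-R" using assms by (simp add: algebra_simps)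
    then have "2*a*b*(m*C-R) \<ge> 2*a*b*(m*E/2)"
      by (rule mult_left_mono[OF _ ab])
    moreover have "Q*(a+b+1) \<le> (m * (real m - 1) * E)*(a+b+1)"
      using assms n2 unfolding a_def b_def by (intro mult_right_mono) auto
    ultimately show ?thesis by (simp add: algebra_simps)
  qed
  have D: "real (l - n) * (2*a*b*(m*C-R) - Q*(a+b+1) + m*E*(m*(a+b+1) - (a+1)*(b+1))) \<ge> 0"
    using G by simp
  have a0: "a > 0" and b0: "b > 0" using n2 unfolding a_def b_def by auto
  have nl: "real n = a + 1" "real l = b + 1" "real (l - n) = b - a" using assms
    unfolding a_def b_def by (auto simp: of_nat_diff)
  have eq: "n * ((real (l-m)) * C + R + (Q + m * real (l-m) * E) / (2 * (real l - 1)))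
      - l * ((real (n-m)) * C + R + (Q + m * real (n-m) * E) / (2 * (real n - 1)))
      = real (l - n) * (2*a*b*(m*C-R) - Q*(a+b+1) + m*E*(m*(a+b+1) - (a+1)*(b+1))) / (2*a*b)"
    unfolding \<open>real (n-m) = real n - m\<close> \<open>real (l-m) = real l - m\<close> nl
    using a0 b0 by (simp add: field_simps)
  have "0 \<le> real (l - n) * (2*a*b*(m*C-R) - Q*(a+b+1) + m*E*(m*(a+b+1) - (a+1)*(b+1))) / (2*a*b)"
    using D a0 b0 by simp
  then show ?thesis using eq by linarith
qed


lemma min_perm:
  fixes F :: "(nat \<Rightarrow> nat) \<Rightarrow> real" and S :: "nat set"
  assumes "finite S"
  shows "\<exists>\<pi>. \<pi> permutes S \<and> Min {F \<pi> | \<pi>. \<pi> permutes S} = F \<pi>"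
    and "\<And>\<sigma>. \<sigma> permutes S \<Longrightarrow> Min {F \<pi> | \<pi>. \<pi> permutes S} \<le> F \<sigma>"
proof -
  have eq: "{F \<pi> | \<pi>. \<pi> permutes S} = F ` {\<pi>. \<pi> permutes S}" by auto
  have fin: "finite {F \<pi> | \<pi>. \<pi> permutes S}" unfolding eq
    using finite_permutations[OF assms] by simp
  have ne: "{F \<pi> | \<pi>. \<pi> permutes S} \<noteq> {}" using permutes_id by blast
  show "\<exists>\<pi>. \<pi> permutes S \<and> Min {F \<pi> | \<pi>. \<pi> permutes S} = F \<pi>"
    using Min_in[OF fin ne] by auto
  show "\<And>\<sigma>. \<sigma> permutes S \<Longrightarrow> Min {F \<pi> | \<pi>. \<pi> permutes S} \<le> F \<sigma>"
    using Min_le[OF fin] by blast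
qed

lemma cost_nonneg:
  assumes "n \<ge> 1"
  shows "gospa1_cost dX dY p C1 CY m v e n w f \<pi> \<ge> 0"
  unfolding gospa1_cost_def using assms
  by (intro add_nonneg_nonneg mult_nonneg_nonneg sum_nonneg divide_nonneg_nonneg) auto

lemma sum_offdiag:
  fixes E :: real assumes "i \<in> {1..m}"
  shows "(\<Sum>i'\<in>{1..m}. (if i = i' then 0 else E)) = (real m - 1) * E"
proof -
  have "(\<Sum>i'\<in>{1..m}. (if i = i' then 0 else E)) = (\<Sum>i'\<in>{1..m}. E - (if i = i' then E else 0))"
    by (intro sum.cong) auto
  also have "\<dots> = real m * E - E" using assms by (simp add: sum_subtractf)
  finally show ?thesis by (simp add: algebra_simps)
qed

theorem lemmaB:
  fixes dX :: "'x \<Rightarrow> 'x \<Rightarrow> real" and dY :: "'y \<Rightarrow> 'y \<Rightarrow> real"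
    and y0 :: 'y and p CX CY C1 :: real and m n l :: nat
    and v w :: "nat \<Rightarrow> 'x" and e f :: "nat \<Rightarrow> nat \<Rightarrow> 'y"
  assumes "pseudometric dX" and "pseudometric dY"
    and "\<forall>x x'. dX x x' \<le> CX" and "\<forall>y y'. dY y y' \<le> CY"
    and "p \<ge> 1" and "C1 \<ge> 0"
    and "C1 powr p \<ge> CX powr p + CY powr p / 2"
    and "m \<le> n" and "n \<le> l" and "n \<ge> 1"
    and "is_graph y0 m e" and "is_graph y0 n f"
  shows "gospa1 (ext_dist dX ((C1 powr p - CY powr p / 2) powr (1 / p))) (ext_dist dY CY) p C1 CY
            m (Orig \<circ> v) (\<lambda>i i'. Orig (e i i')) n (Orig \<circ> w) (\<lambda>i i'. Orig (f i i'))
         \<le> gospa1 (ext_dist dX ((C1 powr p - CY powr p / 2) powr (1 / p))) (ext_dist dY CY) p C1 CY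
            m (Orig \<circ> v) (\<lambda>i i'. Orig (e i i')) l (ext_vertices n w) (ext_edges y0 n f)"
proof -
  note pX = assms(1)[unfolded pseudometric_def] and pY = assms(2)[unfolded pseudometric_def]
  have dXnn: "dX x y \<ge> 0" for x y
  proof -
    have "dX x x \<le> dX x y + dX y x" using pX by blast
    thus ?thesis using pX by auto
  qed
  have dYnn: "dY x y \<ge> 0" for x y
  proof -
    have "dY x x \<le> dY x y + dY y x" using pY by blast
    thus ?thesis using pY by auto
  qed
  have p0: "p > 0" using assms(5) by simp
  define C where "C = C1 powr p"
  define E where "E = CY powr p"
  define Dv where "Dv = C1 powr p - CY powr p / 2"
  define c where "c = Dv powr (1/p)"
  have CX0: "CX \<ge> 0" using assms(3) pX dXnn by (meson order_trans)
  have CY0: "CY \<ge> 0" using assms(4) dYnn by (meson order_trans)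
  have E0: "E \<ge> 0" unfolding E_def by simp
  have XDv: "CX powr p \<le> Dv" unfolding Dv_def using assms(7) by simp
  have Dv0: "Dv \<ge> 0" using XDv by (meson order_trans powr_ge_zero)
  have cp: "c powr p = Dv" unfolding c_def powr_powr using p0 Dv0 by simp
  have EC: "E/2 \<le> C" unfolding E_def C_def using assms(7) by (smt (verit) powr_ge_zero)
  have dXb: "dX x y powr p \<le> CX powr p" for x y
    using assms(3) dXnn p0 by (intro powr_mono2) auto
  have dYb: "dY x y powr p \<le> E" for x y
    unfolding E_def using assms(4) dYnn p0 by (intro powr_mono2) auto
  define DX where "DX = ext_dist dX c"
  define DY where "DY = ext_dist dY CY"
  define costL where "costL = gospa1_cost DX DY p C1 CY m (Orig \<circ> v) (\<lambda>i i'. Orig (e i i')) l (ext_vertices n w) (ext_edges y0 n f)"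
  define costN where "costN = gospa1_cost DX DY p C1 CY m (Orig \<circ> v) (\<lambda>i i'. Orig (e i i')) n (Orig \<circ> w) (\<lambda>i i'. Orig (f i i'))"
  define AL where "AL = Min {costL \<pi> | \<pi>. \<pi> permutes {1..l}}"
  define AN where "AN = Min {costN \<pi> | \<pi>. \<pi> permutes {1..n}}"
  obtain \<pi> where pi: "\<pi> permutes {1..l}" and AL: "AL = costL \<pi>"
    using min_perm(1)[of "{1..l}" costL] unfolding AL_def by auto
  have piim: "\<pi> i \<in> {1..l}" if "i \<in> {1..m}" for i
    using permutes_in_image[OF pi] that assms(8,9) by auto
  have piinj: "inj_on \<pi> A" for A using permutes_inj[OF pi] by (simp add: inj_on_def inj_def)
  define S where "S = {i\<in>{1..m}. \<pi> i \<le> n}"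
  define U where "U = {i\<in>{1..m}. \<not> \<pi> i \<le> n}"
  define T where "T = {1..n} - \<pi> ` S"
  have SU: "S \<union> U = {1..m}" "S \<inter> U = {}" unfolding S_def U_def by auto
  have fSU: "finite S" "finite U" unfolding S_def U_def by auto
  have cSU: "card S + card U = m" using card_Un_disjoint[OF fSU SU(2)] SU(1) by simp
  have piS: "\<pi> ` S \<subseteq> {1..n}" using piim unfolding S_def by auto
  have cT: "card T = n - card S" unfolding T_def
    using card_Diff_subset[OF finite_imageI[OF fSU(1)] piS] card_image[OF piinj[of S]] by simp
  have "card U \<le> card T" using cSU cT assms(8) by linarith
  then obtain k where k: "k ` U \<subseteq> T" "inj_on k U"
    using card_le_inj[of U T] unfolding U_def T_def by auto
  define g where "g i = (if \<pi> i \<le> n then \<pi> i else k i)" for i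
  have ginj: "inj_on g {1..m}"
  proof (rule inj_onI)
    fix i j assume ij: "i \<in> {1..m}" "j \<in> {1..m}" "g i = g j"
    show "i = j"
    proof (cases "\<pi> i \<le> n"; cases "\<pi> j \<le> n")
      assume "\<pi> i \<le> n" "\<pi> j \<le> n" thus ?thesis using ij piinj[of UNIV] unfolding g_def by (auto simp: inj_on_def)
    next
      assume a: "\<pi> i \<le> n" "\<not> \<pi> j \<le> n"
      have "i \<in> S" "j \<in> U" using a ij unfolding S_def U_def by auto
      hence "g j \<in> T" "g i \<in> \<pi> ` S" using k(1) a unfolding g_def by auto
      thus ?thesis using ij(3) unfolding T_def by auto
    next
      assume a: "\<not> \<pi> i \<le> n" "\<pi> j \<le> n"
      have "j \<in> S" "i \<in> U" using a ij unfolding S_def U_def by auto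
      hence "g i \<in> T" "g j \<in> \<pi> ` S" using k(1) a unfolding g_def by auto
      thus ?thesis using ij(3) unfolding T_def by auto
    next
      assume "\<not> \<pi> i \<le> n" "\<not> \<pi> j \<le> n"
      thus ?thesis using ij k(2) unfolding g_def U_def inj_on_def by auto
    qed
  qed
  have gim: "g ` {1..m} \<subseteq> {1..n}"
  proof
    fix x assume "x \<in> g ` {1..m}"
    then obtain i where i: "i \<in> {1..m}" "x = g i" by auto
    show "x \<in> {1..n}"
    proof (cases "\<pi> i \<le> n")
      case True thus ?thesis using piim[OF i(1)] i unfolding g_def by auto
    next
      case False then have "i \<in> U" using i unfolding U_def by auto
      thus ?thesis using k(1) i False unfolding g_def T_def by auto
    qed
  qed
  obtain \<sigma> where sigma: "\<sigma> permutes {1..n}" "\<forall>i\<in>{1..m}. \<sigma> i = g i"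
    using extend_perm[of "{1..n}" "{1..m}" g] ginj gim assms(8) by auto
  have sig1: "\<sigma> i = \<pi> i" if "i \<in> {1..m}" "\<pi> i \<le> n" for i
    using sigma that unfolding g_def by auto
  have sig2: "\<sigma> i \<in> {1..n}" if "i \<in> {1..m}" for i
    using sigma(2) gim that by (metis image_subset_iff)

  have ediag: "e i i = y0" if "i \<in> {1..m}" for i using assms(11) that unfolding is_graph_def by auto
  have fdiag: "f j j = y0" if "j \<in> {1..n}" for j using assms(12) that unfolding is_graph_def by auto
  have DXo: "DX (Orig a) (Orig b) = dX a b" for a b unfolding DX_def by simp
  have DXs: "DX (Orig a) Star' = c" for a unfolding DX_def by simp
  have DYo: "DY (Orig a) (Orig b) = dY a b" for a b unfolding DY_def by simp
  have DYs: "DY (Orig a) Star' = CY" for a unfolding DY_def by simp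
  have dY0: "dY a a = 0" for a using pY by blast
  have zp: "(0::real) powr p = 0" by simp
  define rL where "rL i = DX (Orig (v i)) (ext_vertices n w (\<pi> i)) powr p" for i
  define rN where "rN i = DX (Orig (v i)) (Orig (w (\<sigma> i))) powr p" for i
  define qL where "qL i i' = DY (Orig (e i i')) (ext_edges y0 n f (\<pi> i) (\<pi> i')) powr p" for i i'
  define qN where "qN i i' = DY (Orig (e i i')) (Orig (f (\<sigma> i) (\<sigma> i'))) powr p" for i i'
  have V1: "rN i \<le> rL i" if i: "i \<in> {1..m}" for i
  proof (cases "\<pi> i \<le> n")
    case True thus ?thesis using sig1[OF i] unfolding rN_def rL_def ext_vertices_def by simp
  next
    case False
    then have "rL i = Dv" unfolding rL_def ext_vertices_def using DXs cp by simp
    moreover have "rN i \<le> CX powr p" unfolding rN_def DXo by (rule dXb)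
    ultimately show ?thesis using XDv by linarith
  qed
  have V2: "rL i \<le> Dv" for i
  proof (cases "\<pi> i \<le> n")
    case True
    then have "rL i \<le> CX powr p" unfolding rL_def ext_vertices_def using DXo dXb by simp
    thus ?thesis using XDv by linarith
  next
    case False
    then show ?thesis unfolding rL_def ext_vertices_def using DXs cp by simp
  qed
  have E1: "qN i i' \<le> qL i i'" if i: "i \<in> {1..m}" "i' \<in> {1..m}" for i i'
  proof (cases "\<pi> i \<le> n \<and> \<pi> i' \<le> n")
    case True thus ?thesis using sig1 i unfolding qN_def qL_def ext_edges_def by simp
  next
    case False
    show ?thesis
    proof (cases "i = i'")
      case True
      then have "qN i i' = 0" unfolding qN_def using ediag[OF i(1)] fdiag[OF sig2[OF i(1)]] DYo dY0 by simp
      thus ?thesis unfolding qL_def by simp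
    next
      case ne: False
      then have "\<pi> i \<noteq> \<pi> i'" using piinj[of UNIV] by (auto simp: inj_on_def)
      then have "ext_edges y0 n f (\<pi> i) (\<pi> i') = Star'" using False unfolding ext_edges_def by auto
      then have "qL i i' = E" unfolding qL_def E_def using DYs by simp
      moreover have "qN i i' \<le> E" unfolding qN_def DYo by (rule dYb)
      ultimately show ?thesis by simp
    qed
  qed
  have E2: "qL i i' \<le> (if i = i' then 0 else E)" if i: "i \<in> {1..m}" "i' \<in> {1..m}" for i i'
  proof (cases "i = i'")
    case True
    have "ext_edges y0 n f (\<pi> i) (\<pi> i) = Orig y0"
      using fdiag[of "\<pi> i"] piim[OF i(1)] unfolding ext_edges_def by auto
    then show ?thesis using True ediag[OF i(1)] unfolding qL_def using DYo dY0 by simp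
  next
    case ne: False
    show ?thesis
    proof (cases "\<pi> i \<le> n \<and> \<pi> i' \<le> n")
      case True thus ?thesis using ne dYb unfolding qL_def ext_edges_def by (simp add: DYo)
    next
      case False
      have "\<pi> i \<noteq> \<pi> i'" using ne piinj[of UNIV] by (auto simp: inj_on_def)
      then have "ext_edges y0 n f (\<pi> i) (\<pi> i') = Star'" using False unfolding ext_edges_def by auto
      then show ?thesis unfolding qL_def E_def using ne DYs by simp
    qed
  qed
  define R where "R = (\<Sum>i\<in>{1..m}. rL i)"
  define Q where "Q = (\<Sum>i\<in>{1..m}. \<Sum>i'\<in>{1..m}. qL i i')"
  have R0: "0 \<le> R" unfolding R_def rL_def by (simp add: sum_nonneg)
  have Q0: "0 \<le> Q" unfolding Q_def qL_def by (simp add: sum_nonneg)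
  have Rb: "R \<le> m * (C - E/2)"
  proof -
    have "R \<le> (\<Sum>i\<in>{1..m}. Dv)" unfolding R_def by (rule sum_mono) (rule V2)
    thus ?thesis unfolding Dv_def C_def E_def by simp
  qed
  have Qb: "Q \<le> m * (real m - 1) * E"
  proof -
    have "Q \<le> (\<Sum>i\<in>{1..m}. \<Sum>i'\<in>{1..m}. (if i = i' then 0 else E))"
      unfolding Q_def by (intro sum_mono) (rule E2; simp)
    also have "\<dots> = (\<Sum>i\<in>{1..m}. (real m - 1) * E)" by (intro sum.cong refl sum_offdiag)
    finally show ?thesis by simp
  qed
  have cL: "costL \<pi> = real (l-m) * C + R + (Q + m * real (l-m) * E) / (2 * (real l - 1))"
  proof -
    have "(\<Sum>i\<in>{1..m}. (\<Sum>i'\<in>{1..m}. qL i i') + real (l-m) * E) = Q + m * real (l-m) * E"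
      unfolding Q_def by (simp add: sum.distrib)
    thus ?thesis unfolding costL_def gospa1_cost_def R_def rL_def qL_def C_def E_def o_apply by simp
  qed
  have cN: "costN \<sigma> \<le> real (n-m) * C + R + (Q + m * real (n-m) * E) / (2 * (real n - 1))"
  proof -
    have "(\<Sum>i\<in>{1..m}. (\<Sum>i'\<in>{1..m}. qN i i') + real (n-m) * E) = (\<Sum>i\<in>{1..m}. \<Sum>i'\<in>{1..m}. qN i i') + m * real (n-m) * E"
      by (simp add: sum.distrib)
    then have eqN: "costN \<sigma> = real (n-m) * C + (\<Sum>i\<in>{1..m}. rN i) + ((\<Sum>i\<in>{1..m}. \<Sum>i'\<in>{1..m}. qN i i') + m * real (n-m) * E) / (2 * (real n - 1))"
      unfolding costN_def gospa1_cost_def rN_def qN_def C_def E_def o_apply by simp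
    have "(\<Sum>i\<in>{1..m}. rN i) \<le> R" unfolding R_def by (rule sum_mono) (rule V1; simp)
    moreover have "(\<Sum>i\<in>{1..m}. \<Sum>i'\<in>{1..m}. qN i i') \<le> Q" unfolding Q_def
      by (intro sum_mono) (rule E1; simp)
    moreover have "2 * (real n - 1) \<ge> 0" using assms(10) by simp
    ultimately have "((\<Sum>i\<in>{1..m}. \<Sum>i'\<in>{1..m}. qN i i') + m * real (n-m) * E) / (2 * (real n - 1))
        \<le> (Q + m * real (n-m) * E) / (2 * (real n - 1))"
      by (intro divide_right_mono) auto
    with eqN \<open>(\<Sum>i\<in>{1..m}. rN i) \<le> R\<close> show ?thesis by linarith
  qed
  have key: "l * (real (n-m) * C + R + (Q + m * real (n-m) * E) / (2 * (real n - 1)))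
      \<le> n * (real (l-m) * C + R + (Q + m * real (l-m) * E) / (2 * (real l - 1)))"
    by (rule arith_key) (use assms(8,9,10) Rb Qb Q0 E0 EC R0 in auto)
  have AN: "AN \<le> costN \<sigma>" unfolding AN_def by (rule min_perm(2)) (use sigma in auto)
  have AN0: "AN \<ge> 0" and AL0: "AL \<ge> 0"
  proof -
    obtain \<tau> where "\<tau> permutes {1..n}" "AN = costN \<tau>"
      using min_perm(1)[of "{1..n}" costN] unfolding AN_def by auto
    thus "AN \<ge> 0" unfolding costN_def using cost_nonneg assms(10) by simp
    show "AL \<ge> 0" unfolding AL costL_def using assms(9,10) by (intro cost_nonneg) simp
  qed
  have lpos: "real l > 0" "real n > 0" using assms(9,10) by auto
  have "real l * AN \<le> real n * AL"
  proof -
    have "real l * AN \<le> real l * costN \<sigma>" using AN lpos by simp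
    also have "\<dots> \<le> l * (real (n-m) * C + R + (Q + m * real (n-m) * E) / (2 * (real n - 1)))"
      using cN lpos by simp
    also have "\<dots> \<le> real n * AL" using key cL AL by simp
    finally show ?thesis .
  qed
  then have frac: "AN / real n \<le> AL / real l" using lpos by (simp add: field_simps)
  have conv: "real k powr (- 1 / p) * A powr (1/p) = (A / real k) powr (1/p)" if "A \<ge> 0" for A k
  proof -
    have "- 1 / p = - (1/p)" by simp
    then have "real k powr (- 1 / p) = inverse (real k powr (1/p))" by (simp only: powr_minus)
    moreover have "(A / real k) powr (1/p) = A powr (1/p) / real k powr (1/p)"
      using that by (simp add: powr_divide)
    ultimately show ?thesis by (simp add: divide_inverse)
  qed
  have "(AN / real n) powr (1/p) \<le> (AL / real l) powr (1/p)"
    using frac AN0 lpos p0 by (intro powr_mono2) auto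
  then show ?thesis unfolding gospa1_def
    using conv[OF AN0, of n] conv[OF AL0, of l]
    unfolding AN_def AL_def costN_def costL_def DX_def DY_def c_def Dv_def by simp
qed

end
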